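(* Let $\nu$ be a charge on $\mathbb{C}$ satisfying the Blaschke condition near infinity in $\mathbb{C}^{\mathrm{up}}$, i.e. $\int_{\mathbb{C}^{\mathrm{up}}\setminus D(r_0)}\operatorname{Im}\frac1{\bar z}\,d|\nu|(z)<+\infty$ for some $r_0>0$, and let $(\nu^{\mathrm{bal}})^{\mathbb{R}}$ be the distribution function on $\mathbb{R}$ of the balayage $\nu^{\mathrm{bal}}$ of $\nu$ from $\mathbb{C}^{\mathrm{up}}$. Then: (i) if $[x_1,x_2]\subset\mathbb{R}\setminus\{0\}$ is a segment with $[x_1,x_2]\cap\operatorname{supp}\nu=\varnothing$, then $(\nu^{\mathrm{bal}})^{\mathbb{R}}$ is Lipschitz on $[x_1,x_2]$; (ii) if $\nu$ is of finite type at order $p\ge 0$, i.e. $\limsup_{r\to+\infty}|\nu|(\overline D(r))/r^p<+\infty$, and $$\liminf_{\substack{z\to\infty\\ z\in\{\operatorname{Im}z\ge0\}\cap\operatorname{supp}\nu}}\frac{\operatorname{Im}z}{|z|}>0,$$ then there exist $b>0$ and $r_0>0$ such that for all $t_1<t_2$ with $x_0:=\frac{t_1+t_2}2$ satisfying $|x_0|\ge r_0$ and $|t_2-t_1|\le |x_0|/2$ one has $|(\nu^{\mathrm{bal}})^{\mathbb{R}}(t_2)-(\nu^{\mathrm{bal}})^{\mathbb{R}}(t_1)|\le b\,|t_2-t_1|\,|x_0|^{p-1}$.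
   Context: A charge on $\mathbb{C}$ is a countably additive function on Borel sets with values in $[-\infty,+\infty]$, finite on compact sets; $|\nu|$ is its total variation. $D(r)$, $\overline D(r)$: open/closed discs of radius $r$ centred at $0$. $\mathbb{C}^{\mathrm{up}}=\{\operatorname{Im}z>0\}$, $\mathbb{C}_{\overline{\mathrm{lw}}}=\{\operatorname{Im}z\le0\}$. Harmonic measure: $\omega(z,B)=\frac1\pi\int_{B\cap\mathbb{R}}\frac{\operatorname{Im}z}{(t-\operatorname{Re}z)^2+(\operatorname{Im}z)^2}dt$ for $z\in\mathbb{C}^{\mathrm{up}}$. Balayage from $\mathbb{C}^{\mathrm{up}}$: $\nu^{\mathrm{bal}}(B)=\int_{\mathbb{C}^{\mathrm{up}}}\omega(z,B)\,d\nu(z)+\nu(B\cap\mathbb{C}_{\overline{\mathrm{lw}}})$. For a charge $\mu$, $\mu^{\mathbb{R}}(x)=\mu([0,x])$ for $x\ge0$ and $-\mu([x,0))$ for $x<0$. *)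

theory Defs
  imports "HOL-Analysis.Analysis"
begin

text \<open>A charge \<nu> on the complex plane is represented by its Jordan decomposition
  \<nu> = \<nu>p - \<nu>m: two Borel measures, finite on compact sets, mutually singular.\<close>

definition is_charge :: "complex measure \<Rightarrow> complex measure \<Rightarrow> bool" where
  "is_charge \<nu>p \<nu>m \<longleftrightarrow>
     sets \<nu>p = sets borel \<and> sets \<nu>m = sets borel \<and>
     (\<forall>K. compact K \<longrightarrow> emeasure \<nu>p K < \<infinity> \<and> emeasure \<nu>m K < \<infinity>) \<and>
     (\<exists>P \<in> sets borel. emeasure \<nu>m P = 0 \<and> emeasure \<nu>p (- P) = 0)"

definition totvar :: "complex measure \<Rightarrow> complex measure \<Rightarrow> complex set \<Rightarrow> ennreal" where
  "totvar \<nu>p \<nu>m A = emeasure \<nu>p A + emeasure \<nu>m A"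

definition charge_supp :: "complex measure \<Rightarrow> complex measure \<Rightarrow> complex set" where
  "charge_supp \<nu>p \<nu>m = {z. \<forall>e>0. totvar \<nu>p \<nu>m (ball z e) > 0}"

definition upper_half :: "complex set" where
  "upper_half = {z. Im z > 0}"

definition harm_measure :: "complex \<Rightarrow> real set \<Rightarrow> ennreal" where
  "harm_measure z B =
     (\<integral>\<^sup>+ t. indicator B t * ennreal (Im z / ((t - Re z)\<^sup>2 + (Im z)\<^sup>2)) \<partial>lborel) / ennreal pi"

text \<open>Balayage of a (positive) measure from the upper half-plane, evaluated on a
  set B of the real line (then B \<inter> closed lower half-plane = B).\<close>
definition bal_measure :: "complex measure \<Rightarrow> real set \<Rightarrow> ennreal" where
  "bal_measure \<mu> B =
     (\<integral>\<^sup>+ z. indicator upper_half z * harm_measure z B \<partial>\<mu>) + emeasure \<mu> (complex_of_real ` B)"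

definition charge_bal :: "complex measure \<Rightarrow> complex measure \<Rightarrow> real set \<Rightarrow> real" where
  "charge_bal \<nu>p \<nu>m B = enn2real (bal_measure \<nu>p B) - enn2real (bal_measure \<nu>m B)"

definition distr_fun :: "(real set \<Rightarrow> real) \<Rightarrow> real \<Rightarrow> real" where
  "distr_fun \<mu> x = (if 0 \<le> x then \<mu> {0..x} else - \<mu> {x..<0})"

end

theory Submission
  imports Defs
begin
lemma space_borel_eq: "sets M = sets (borel::'a::topological_space measure) \<Longrightarrow> space M = UNIV"
  by (metis sets_eq_imp_space_eq space_borel)

lemma supp_null:
  assumes "is_charge \<nu>p \<nu>m"
  shows "- charge_supp \<nu>p \<nu>m \<in> null_sets \<nu>p \<and> - charge_supp \<nu>p \<nu>m \<in> null_sets \<nu>m"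
proof -
  have sp: "sets \<nu>p = sets borel" and sm: "sets \<nu>m = sets borel" using assms by (auto simp: is_charge_def)
  define \<F> where "\<F> = {ball z e | z e. e > 0 \<and> totvar \<nu>p \<nu>m (ball z e) = 0}"
  have eq: "\<Union>\<F> = - charge_supp \<nu>p \<nu>m"
  proof
    show "\<Union>\<F> \<subseteq> - charge_supp \<nu>p \<nu>m"
    proof
      fix x assume "x \<in> \<Union>\<F>"
      then obtain z e where e: "e > 0" "totvar \<nu>p \<nu>m (ball z e) = 0" "x \<in> ball z e" by (auto simp: \<F>_def)
      define d where "d = e - dist z x"
      have "d > 0" using e by (simp add: d_def dist_commute)
      have "ball x d \<subseteq> ball z e" using e by (auto simp: d_def dist_commute) (smt (verit) dist_triangle dist_commute)
      hence "totvar \<nu>p \<nu>m (ball x d) \<le> totvar \<nu>p \<nu>m (ball z e)"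
        unfolding totvar_def using sp sm by (intro add_mono emeasure_mono) auto
      with e have "totvar \<nu>p \<nu>m (ball x d) = 0" by simp
      with \<open>d>0\<close> show "x \<in> - charge_supp \<nu>p \<nu>m" by (auto simp: charge_supp_def intro!: exI[of _ d])
    qed
  next
    show "- charge_supp \<nu>p \<nu>m \<subseteq> \<Union>\<F>"
    proof
      fix x assume "x \<in> - charge_supp \<nu>p \<nu>m"
      then obtain e where "e > 0" "\<not> totvar \<nu>p \<nu>m (ball x e) > 0" by (auto simp: charge_supp_def)
      then show "x \<in> \<Union>\<F>" unfolding \<F>_def by (auto simp: not_less intro!: exI[of _ "ball x e"])
    qed
  qed
  obtain \<F>' where F': "\<F>' \<subseteq> \<F>" "countable \<F>'" "\<Union>\<F>' = \<Union>\<F>"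
    using Lindelof[of \<F>] by (auto simp: \<F>_def)
  have nul: "S \<in> null_sets \<nu>p \<and> S \<in> null_sets \<nu>m" if "S \<in> \<F>'" for S
  proof -
    from that F' obtain z e where "S = ball z e" "totvar \<nu>p \<nu>m (ball z e) = 0" by (auto simp: \<F>_def)
    then show ?thesis using sp sm by (auto simp: totvar_def null_sets_def)
  qed
  have "\<Union>\<F>' \<in> null_sets \<nu>p" using null_sets_UN'[of \<F>' "\<lambda>S. S" \<nu>p] F'(2) nul by auto
  moreover have "\<Union>\<F>' \<in> null_sets \<nu>m" using null_sets_UN'[of \<F>' "\<lambda>S. S" \<nu>m] F'(2) nul by auto
  ultimately show ?thesis using F'(3) eq by simp
qed

lemma harm_meas_aux:
  assumes [measurable]: "B \<in> sets borel"
  shows "(\<lambda>(z::complex, t::real). indicator B t * ennreal (Im z / ((t - Re z)\<^sup>2 + (Im z)\<^sup>2))) \<in> borel_measurable (borel \<Otimes>\<^sub>M lborel)"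
  by measurable

lemma harm_meas[measurable]:
  assumes "B \<in> sets borel"
  shows "(\<lambda>z. harm_measure z B) \<in> borel_measurable borel"
proof -
  have "(\<lambda>z. \<integral>\<^sup>+ t. indicator B t * ennreal (Im z / ((t - Re z)\<^sup>2 + (Im z)\<^sup>2)) \<partial>lborel) \<in> borel_measurable borel"
    using lborel.borel_measurable_nn_integral[OF harm_meas_aux[OF assms]] by simp
  then show ?thesis unfolding harm_measure_def by measurable
qed

lemma cr_image_eq: "complex_of_real ` B = {z. Im z = 0} \<inter> Re -` B"
  by (auto simp: image_iff complex_eq_iff intro!: bexI[of _ "Re _"])

lemma cr_image_sets[measurable]:
  assumes [measurable]: "B \<in> sets borel"
  shows "complex_of_real ` B \<in> sets borel"
  unfolding cr_image_eq by measurable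

lemma harm_add:
  assumes [measurable]: "A \<in> sets borel" "B \<in> sets borel" and d: "A \<inter> B = {}"
  shows "harm_measure z (A \<union> B) = harm_measure z A + harm_measure z B"
proof -
  have "(\<integral>\<^sup>+ t. indicator (A \<union> B) t * ennreal (Im z / ((t - Re z)\<^sup>2 + (Im z)\<^sup>2)) \<partial>lborel)
      = (\<integral>\<^sup>+ t. indicator A t * ennreal (Im z / ((t - Re z)\<^sup>2 + (Im z)\<^sup>2)) + indicator B t * ennreal (Im z / ((t - Re z)\<^sup>2 + (Im z)\<^sup>2)) \<partial>lborel)"
    using d by (intro nn_integral_cong) (auto simp: indicator_def)
  also have "\<dots> = (\<integral>\<^sup>+ t. indicator A t * ennreal (Im z / ((t - Re z)\<^sup>2 + (Im z)\<^sup>2)) \<partial>lborel) + (\<integral>\<^sup>+ t. indicator B t * ennreal (Im z / ((t - Re z)\<^sup>2 + (Im z)\<^sup>2)) \<partial>lborel)"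
    by (intro nn_integral_add) auto
  finally show ?thesis unfolding harm_measure_def by (simp add: add_divide_distrib_ennreal)
qed

lemma bal_add:
  assumes sM: "sets M = sets borel" and [measurable]: "A \<in> sets borel" "B \<in> sets borel" and d: "A \<inter> B = {}"
  shows "bal_measure M (A \<union> B) = bal_measure M A + bal_measure M B"
proof -
  have mA[measurable]: "(\<lambda>z. indicator upper_half z * harm_measure z A) \<in> borel_measurable M"
    and mB[measurable]: "(\<lambda>z. indicator upper_half z * harm_measure z B) \<in> borel_measurable M"
    unfolding measurable_cong_sets[OF sM refl] upper_half_def by measurable
  have "(\<integral>\<^sup>+ z. indicator upper_half z * harm_measure z (A \<union> B) \<partial>M)
     = (\<integral>\<^sup>+ z. indicator upper_half z * harm_measure z A + indicator upper_half z * harm_measure z B \<partial>M)"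
    by (intro nn_integral_cong) (simp add: harm_add[OF assms(2,3) d] distrib_left)
  also have "\<dots> = (\<integral>\<^sup>+ z. indicator upper_half z * harm_measure z A \<partial>M) + (\<integral>\<^sup>+ z. indicator upper_half z * harm_measure z B \<partial>M)"
    by (intro nn_integral_add) auto
  finally have 1: "(\<integral>\<^sup>+ z. indicator upper_half z * harm_measure z (A \<union> B) \<partial>M) = \<dots>" .
  have 2: "emeasure M (complex_of_real ` (A \<union> B)) = emeasure M (complex_of_real ` A) + emeasure M (complex_of_real ` B)"
    by (subst image_Un, rule plus_emeasure[symmetric]) (use d sM in auto)
  show ?thesis unfolding bal_measure_def 1 2 by (simp add: algebra_simps)
qed

lemma enn_diff_bound:
  assumes "c < \<infinity>"
  shows "0 \<le> enn2real (a + c) - enn2real a \<and> enn2real (a + c) - enn2real a \<le> enn2real c"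
proof (cases "a = \<infinity>")
  case True then show ?thesis by simp
next
  case False
  then have "enn2real (a + c) = enn2real a + enn2real c" using assms by (simp add: enn2real_plus less_top)
  then show ?thesis by simp
qed

lemma F_diff:
  assumes ch: "is_charge \<nu>p \<nu>m" and t: "t1 < t2" "0 \<le> t1 \<or> t2 < 0"
    and B: "B = (if 0 \<le> t1 then {t1<..t2} else {t1..<t2})"
    and fp: "bal_measure \<nu>p B < \<infinity>" and fm: "bal_measure \<nu>m B < \<infinity>"
  shows "\<bar>distr_fun (charge_bal \<nu>p \<nu>m) t2 - distr_fun (charge_bal \<nu>p \<nu>m) t1\<bar>
           \<le> enn2real (bal_measure \<nu>p B) + enn2real (bal_measure \<nu>m B)"
proof -
  have sp: "sets \<nu>p = sets borel" and sm: "sets \<nu>m = sets borel" using ch by (auto simp: is_charge_def)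
  show ?thesis
  proof (cases "0 \<le> t1")
    case True
    have u: "{0..t2} = {0..t1} \<union> {t1<..t2}" using True t by auto
    have d: "{0..t1} \<inter> {t1<..t2} = {}" by auto
    have ep: "bal_measure \<nu>p {0..t2} = bal_measure \<nu>p {0..t1} + bal_measure \<nu>p B"
      unfolding u B using True by (simp add: bal_add[OF sp _ _ d])
    have em: "bal_measure \<nu>m {0..t2} = bal_measure \<nu>m {0..t1} + bal_measure \<nu>m B"
      unfolding u B using True by (simp add: bal_add[OF sm _ _ d])
    have "distr_fun (charge_bal \<nu>p \<nu>m) t2 - distr_fun (charge_bal \<nu>p \<nu>m) t1
       = (enn2real (bal_measure \<nu>p {0..t1} + bal_measure \<nu>p B) - enn2real (bal_measure \<nu>p {0..t1}))
        - (enn2real (bal_measure \<nu>m {0..t1} + bal_measure \<nu>m B) - enn2real (bal_measure \<nu>m {0..t1}))"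
      using True t by (simp add: distr_fun_def charge_bal_def ep em)
    then show ?thesis using enn_diff_bound[OF fp, of "bal_measure \<nu>p {0..t1}"]
        enn_diff_bound[OF fm, of "bal_measure \<nu>m {0..t1}"] by linarith
  next
    case False
    have u: "{t1..<0} = {t2..<0} \<union> {t1..<t2}" using False t by auto
    have d: "{t2..<0} \<inter> {t1..<t2} = {}" by auto
    have ep: "bal_measure \<nu>p {t1..<0} = bal_measure \<nu>p {t2..<0} + bal_measure \<nu>p B"
      unfolding u B using False by (simp add: bal_add[OF sp _ _ d])
    have em: "bal_measure \<nu>m {t1..<0} = bal_measure \<nu>m {t2..<0} + bal_measure \<nu>m B"
      unfolding u B using False by (simp add: bal_add[OF sm _ _ d])
    have "distr_fun (charge_bal \<nu>p \<nu>m) t2 - distr_fun (charge_bal \<nu>p \<nu>m) t1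
       = (enn2real (bal_measure \<nu>p {t2..<0} + bal_measure \<nu>p B) - enn2real (bal_measure \<nu>p {t2..<0}))
        - (enn2real (bal_measure \<nu>m {t2..<0} + bal_measure \<nu>m B) - enn2real (bal_measure \<nu>m {t2..<0}))"
      using False t by (simp add: distr_fun_def charge_bal_def ep em)
    then show ?thesis using enn_diff_bound[OF fp, of "bal_measure \<nu>p {t2..<0}"]
        enn_diff_bound[OF fm, of "bal_measure \<nu>m {t2..<0}"] by linarith
  qed
qed

lemma harm_bound:
  assumes [measurable]: "B \<in> sets borel" and B: "B \<subseteq> {t1..t2}" and t: "t1 \<le> t2"
    and g: "\<forall>t\<in>{t1..t2}. Im z / ((t - Re z)\<^sup>2 + (Im z)\<^sup>2) \<le> g"
  shows "harm_measure z B \<le> ennreal ((t2 - t1) / pi) * ennreal g"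
proof -
  have "(\<integral>\<^sup>+ t. indicator B t * ennreal (Im z / ((t - Re z)\<^sup>2 + (Im z)\<^sup>2)) \<partial>lborel)
      \<le> (\<integral>\<^sup>+ t. ennreal g * indicator {t1..t2} t \<partial>lborel)"
    using B g by (intro nn_integral_mono) (auto simp: indicator_def intro: ennreal_leI)
  also have "\<dots> = ennreal g * ennreal (t2 - t1)"
    using t by (subst nn_integral_cmult_indicator) auto
  finally have "(\<integral>\<^sup>+ t. indicator B t * ennreal (Im z / ((t - Re z)\<^sup>2 + (Im z)\<^sup>2)) \<partial>lborel) / ennreal pi
      \<le> ennreal g * ennreal (t2 - t1) / ennreal pi"
    by (intro divide_right_mono_ennreal)
  also have "\<dots> = ennreal ((t2 - t1) / pi) * ennreal g"
    using t by (simp add: ennreal_times_divide[symmetric] divide_ennreal mult.commute)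
  finally show ?thesis unfolding harm_measure_def .
qed

lemma bal_bound:
  assumes sM: "sets M = sets borel" and [measurable]: "B \<in> sets borel" and B: "B \<subseteq> {t1..t2}" and t: "t1 \<le> t2"
    and z0: "emeasure M (complex_of_real ` {t1..t2}) = 0"
    and ae: "AE z in M. Im z > 0 \<longrightarrow> (\<forall>t\<in>{t1..t2}. Im z / ((t - Re z)\<^sup>2 + (Im z)\<^sup>2) \<le> g z)"
    and [measurable]: "g \<in> borel_measurable borel"
  shows "bal_measure M B \<le> ennreal ((t2 - t1) / pi) * (\<integral>\<^sup>+ z. indicator upper_half z * ennreal (g z) \<partial>M)"
proof -
  have "emeasure M (complex_of_real ` B) \<le> emeasure M (complex_of_real ` {t1..t2})"
    using B sM by (intro emeasure_mono) auto
  with z0 have e0: "emeasure M (complex_of_real ` B) = 0" by simp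
  have "(\<integral>\<^sup>+ z. indicator upper_half z * harm_measure z B \<partial>M)
      \<le> (\<integral>\<^sup>+ z. ennreal ((t2 - t1) / pi) * (indicator upper_half z * ennreal (g z)) \<partial>M)"
  proof (rule nn_integral_mono_AE)
    show "AE z in M. indicator upper_half z * harm_measure z B \<le> ennreal ((t2 - t1) / pi) * (indicator upper_half z * ennreal (g z))"
      using ae
    proof eventually_elim
      case (elim z)
      show ?case
      proof (cases "Im z > 0")
        case True
        then show ?thesis using harm_bound[OF assms(2) B t, of z "g z"] elim
          by (simp add: upper_half_def)
      qed (simp add: upper_half_def)
    qed
  qed
  also have "\<dots> = ennreal ((t2 - t1) / pi) * (\<integral>\<^sup>+ z. indicator upper_half z * ennreal (g z) \<partial>M)"
    by (rule nn_integral_cmult) (unfold measurable_cong_sets[OF sM refl] upper_half_def, measurable)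
  finally show ?thesis unfolding bal_measure_def e0 by simp
qed

lemma bal_real_bound:
  assumes sM: "sets M = sets borel" and [measurable]: "B \<in> sets borel" and B: "B \<subseteq> {t1..t2}" and t: "t1 \<le> t2"
    and z0: "emeasure M (complex_of_real ` {t1..t2}) = 0"
    and ae: "AE z in M. Im z > 0 \<longrightarrow> (\<forall>t\<in>{t1..t2}. Im z / ((t - Re z)\<^sup>2 + (Im z)\<^sup>2) \<le> g z)"
    and [measurable]: "g \<in> borel_measurable borel"
    and C: "(\<integral>\<^sup>+ z. indicator upper_half z * ennreal (g z) \<partial>M) \<le> ennreal C" and C0: "0 \<le> C"
  shows "bal_measure M B < \<infinity> \<and> enn2real (bal_measure M B) \<le> (t2 - t1) / pi * C"
proof -
  have "bal_measure M B \<le> ennreal ((t2 - t1) / pi) * ennreal C"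
    using bal_bound[OF assms(1-7)] C by (meson dual_order.trans mult_left_mono zero_le)
  also have "\<dots> = ennreal ((t2 - t1) / pi * C)" by (rule ennreal_mult[symmetric]) (use t C0 in auto)
  finally have le: "bal_measure M B \<le> ennreal ((t2 - t1) / pi * C)" .
  then have "bal_measure M B < \<infinity>" using le_less_trans by fastforce
  moreover have "enn2real (bal_measure M B) \<le> (t2 - t1) / pi * C"
    using le t C0 by (intro enn2real_leI) auto
  ultimately show ?thesis by simp
qed

lemma F_bound:
  assumes ch: "is_charge \<nu>p \<nu>m" and t: "t1 < t2" "0 \<le> t1 \<or> t2 < 0"
    and disj: "complex_of_real ` {t1..t2} \<inter> charge_supp \<nu>p \<nu>m = {}"
    and gb: "\<forall>z\<in>charge_supp \<nu>p \<nu>m. Im z > 0 \<longrightarrow> (\<forall>t\<in>{t1..t2}. Im z / ((t - Re z)\<^sup>2 + (Im z)\<^sup>2) \<le> g z)"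
    and [measurable]: "g \<in> borel_measurable borel"
    and Cp: "(\<integral>\<^sup>+ z. indicator upper_half z * ennreal (g z) \<partial>\<nu>p) \<le> ennreal Cp" and Cp0: "0 \<le> Cp"
    and Cm: "(\<integral>\<^sup>+ z. indicator upper_half z * ennreal (g z) \<partial>\<nu>m) \<le> ennreal Cm" and Cm0: "0 \<le> Cm"
  shows "\<bar>distr_fun (charge_bal \<nu>p \<nu>m) t2 - distr_fun (charge_bal \<nu>p \<nu>m) t1\<bar> \<le> (t2 - t1) / pi * (Cp + Cm)"
proof -
  have sp: "sets \<nu>p = sets borel" and sm: "sets \<nu>m = sets borel" using ch by (auto simp: is_charge_def)
  define B where "B = (if 0 \<le> t1 then {t1<..t2} else {t1..<t2})"
  have Bs[measurable]: "B \<in> sets borel" and BS: "B \<subseteq> {t1..t2}" by (auto simp: B_def)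
  have N: "- charge_supp \<nu>p \<nu>m \<in> null_sets \<nu>p" "- charge_supp \<nu>p \<nu>m \<in> null_sets \<nu>m" using supp_null[OF ch] by auto
  have sub: "complex_of_real ` {t1..t2} \<subseteq> - charge_supp \<nu>p \<nu>m" using disj by auto
  have z0p: "emeasure \<nu>p (complex_of_real ` {t1..t2}) = 0"
    by (rule emeasure_eq_0[of "- charge_supp \<nu>p \<nu>m"]) (use N sub in auto)
  have z0m: "emeasure \<nu>m (complex_of_real ` {t1..t2}) = 0"
    by (rule emeasure_eq_0[of "- charge_supp \<nu>p \<nu>m"]) (use N sub in auto)
  have aep: "AE z in \<nu>p. Im z > 0 \<longrightarrow> (\<forall>t\<in>{t1..t2}. Im z / ((t - Re z)\<^sup>2 + (Im z)\<^sup>2) \<le> g z)"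
    by (rule AE_I'[OF N(1)]) (use gb in auto)
  have aem: "AE z in \<nu>m. Im z > 0 \<longrightarrow> (\<forall>t\<in>{t1..t2}. Im z / ((t - Re z)\<^sup>2 + (Im z)\<^sup>2) \<le> g z)"
    by (rule AE_I'[OF N(2)]) (use gb in auto)
  have bp: "bal_measure \<nu>p B < \<infinity> \<and> enn2real (bal_measure \<nu>p B) \<le> (t2 - t1) / pi * Cp"
    using t by (intro bal_real_bound[OF sp Bs BS _ z0p aep _ Cp Cp0]) auto
  have bm: "bal_measure \<nu>m B < \<infinity> \<and> enn2real (bal_measure \<nu>m B) \<le> (t2 - t1) / pi * Cm"
    using t by (intro bal_real_bound[OF sm Bs BS _ z0m aem _ Cm Cm0]) auto
  have "\<bar>distr_fun (charge_bal \<nu>p \<nu>m) t2 - distr_fun (charge_bal \<nu>p \<nu>m) t1\<bar>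
           \<le> enn2real (bal_measure \<nu>p B) + enn2real (bal_measure \<nu>m B)"
    using F_diff[OF ch t B_def] bp bm by blast
  also have "\<dots> \<le> (t2 - t1) / pi * (Cp + Cm)" using bp bm by (simp add: distrib_left)
  finally show ?thesis .
qed

lemma supp_closed:
  assumes ch: "is_charge \<nu>p \<nu>m"
  shows "closed (charge_supp \<nu>p \<nu>m)"
proof -
  have sp: "sets \<nu>p = sets borel" and sm: "sets \<nu>m = sets borel" using ch by (auto simp: is_charge_def)
  have "open (- charge_supp \<nu>p \<nu>m)"
  proof (rule openI)
    fix x assume "x \<in> - charge_supp \<nu>p \<nu>m"
    then obtain e where e: "e > 0" "\<not> totvar \<nu>p \<nu>m (ball x e) > 0" by (auto simp: charge_supp_def)
    have "ball x e \<subseteq> - charge_supp \<nu>p \<nu>m"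
    proof
      fix y assume y: "y \<in> ball x e"
      define d where "d = e - dist x y"
      have "d > 0" using y by (simp add: d_def)
      have "ball y d \<subseteq> ball x e" by (auto simp: d_def) (smt (verit) dist_triangle dist_commute)
      hence "totvar \<nu>p \<nu>m (ball y d) \<le> totvar \<nu>p \<nu>m (ball x e)"
        unfolding totvar_def using sp sm by (intro add_mono emeasure_mono) auto
      with e have "\<not> totvar \<nu>p \<nu>m (ball y d) > 0" by (simp add: not_less)
      with \<open>d>0\<close> show "y \<in> - charge_supp \<nu>p \<nu>m" by (auto simp: charge_supp_def)
    qed
    with e show "\<exists>e>0. ball x e \<subseteq> - charge_supp \<nu>p \<nu>m" by blast
  qed
  then show ?thesis by (simp add: closed_def)
qed

lemma Im_inv_cnj: "Im (1 / cnj z) = Im z / (cmod z)\<^sup>2"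
  by (simp add: Im_divide cmod_power2)

lemma dens_eq: "(t - Re z)\<^sup>2 + (Im z)\<^sup>2 = (cmod (z - complex_of_real t))\<^sup>2"
  by (simp add: cmod_power2 power2_commute)

lemma ball_sets[measurable]: "ball (0::complex) r \<in> sets borel"
  by (simp add: borel_open)

lemma cball_sets[measurable]: "cball (0::complex) r \<in> sets borel"
  by (simp add: borel_closed)

lemma Im_inv_cnj_meas[measurable]: "(\<lambda>z. Im (1 / cnj z)) \<in> borel_measurable borel"
  unfolding Im_inv_cnj by measurable

lemma part1:
  assumes ch: "is_charge \<nu>p \<nu>m" and r0: "r0 > 0"
    and bl: "(\<integral>\<^sup>+ z. indicator (upper_half - ball 0 r0) z * ennreal (Im (1 / cnj z)) \<partial>\<nu>p)
                        + (\<integral>\<^sup>+ z. indicator (upper_half - ball 0 r0) z * ennreal (Im (1 / cnj z)) \<partial>\<nu>m) < \<infinity>"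
    and x: "x1 \<le> x2" "0 \<notin> {x1..x2}" and disj: "complex_of_real ` {x1..x2} \<inter> charge_supp \<nu>p \<nu>m = {}"
  shows "\<exists>L. L-lipschitz_on {x1..x2} (distr_fun (charge_bal \<nu>p \<nu>m))"
proof -
  have sp: "sets \<nu>p = sets borel" and sm: "sets \<nu>m = sets borel" using ch by (auto simp: is_charge_def)
  have cpt: "compact (complex_of_real ` {x1..x2})"
    by (intro compact_continuous_image continuous_intros) auto
  obtain \<delta> where \<delta>: "\<delta> > 0" "\<And>x y. x \<in> complex_of_real ` {x1..x2} \<Longrightarrow> y \<in> charge_supp \<nu>p \<nu>m \<Longrightarrow> \<delta> \<le> dist x y"
    using separate_compact_closed[OF cpt supp_closed[OF ch] disj] by metis
  define R where "R = max r0 (2 * max \<bar>x1\<bar> \<bar>x2\<bar>) + 1"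
  have R: "R > 0" "R > r0" "\<And>t. t \<in> {x1..x2} \<Longrightarrow> 2 * \<bar>t\<bar> < R" using r0 by (auto simp: R_def)
  define g where "g z = (if z \<in> cball 0 R then R / \<delta>\<^sup>2 else 4 * (Im z / (cmod z)\<^sup>2))" for z
  have cbs[measurable]: "cball (0::complex) R \<in> sets borel" by (simp add: borel_closed)
  have gm[measurable]: "g \<in> borel_measurable borel" unfolding g_def by measurable
  have gR: "\<And>z. cmod z \<le> R \<Longrightarrow> g z = R / \<delta>\<^sup>2" "\<And>z. \<not> cmod z \<le> R \<Longrightarrow> g z = 4 * Im (1 / cnj z)" by (auto simp: g_def Im_inv_cnj)
  have gb: "Im z / ((t - Re z)\<^sup>2 + (Im z)\<^sup>2) \<le> g z"
    if z: "z \<in> charge_supp \<nu>p \<nu>m" "Im z > 0" and t: "t \<in> {x1..x2}" for z t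
  proof (cases "cmod z \<le> R")
    case True
    have "\<delta> \<le> dist (complex_of_real t) z" using \<delta>(2)[of "complex_of_real t" z] z t by auto
    then have "\<delta> \<le> cmod (z - complex_of_real t)" by (simp add: dist_norm norm_minus_commute)
    then have d2: "\<delta>\<^sup>2 \<le> (t - Re z)\<^sup>2 + (Im z)\<^sup>2" unfolding dens_eq using \<delta>(1) by (intro power_mono) auto
    have "Im z \<le> R" using True abs_Im_le_cmod[of z] by linarith
    then have "Im z / ((t - Re z)\<^sup>2 + (Im z)\<^sup>2) \<le> R / \<delta>\<^sup>2"
      using d2 z \<delta>(1) by (intro frac_le) auto
    then show ?thesis using True by (simp add: gR)
  next
    case False
    have "cmod z - \<bar>t\<bar> \<le> cmod (z - complex_of_real t)" using norm_triangle_ineq2[of z "complex_of_real t"] by simp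
    moreover have "2 * \<bar>t\<bar> < R" using R(3) t by auto
    ultimately have h: "cmod z / 2 \<le> cmod (z - complex_of_real t)" using False by linarith
    have d2: "(cmod z)\<^sup>2 / 4 \<le> (t - Re z)\<^sup>2 + (Im z)\<^sup>2" unfolding dens_eq
      using power_mono[OF h, of 2] by (simp add: power_divide)
    have cz: "cmod z > 0" using False R by auto
    have "Im z / ((t - Re z)\<^sup>2 + (Im z)\<^sup>2) \<le> Im z / ((cmod z)\<^sup>2 / 4)"
    proof -
      have p1: "0 < (t - Re z)\<^sup>2 + (Im z)\<^sup>2" using z by (simp add: add_nonneg_pos)
      show ?thesis using d2 p1 cz z by (intro divide_left_mono) (auto simp: zero_less_mult_iff)
    qed
    also have "\<dots> = 4 * Im (1 / cnj z)" by (simp add: Im_inv_cnj)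
    finally show ?thesis using False by (simp add: gR)
  qed
  define IB where "IB \<mu> = (\<integral>\<^sup>+ z. indicator (upper_half - ball 0 r0) z * ennreal (Im (1 / cnj z)) \<partial>\<mu>)" for \<mu>
  have Cbound: "(\<integral>\<^sup>+ z. indicator upper_half z * ennreal (g z) \<partial>\<mu>)
      \<le> ennreal (enn2real (ennreal (R / \<delta>\<^sup>2) * emeasure \<mu> (cball 0 R) + 4 * IB \<mu>))"
    if s\<mu>: "sets \<mu> = sets borel" and fin1: "emeasure \<mu> (cball 0 R) < \<infinity>" and fin2: "IB \<mu> < \<infinity>" for \<mu>
  proof -
    have m1[measurable]: "(\<lambda>z. indicator (upper_half - ball 0 r0) z * ennreal (Im (1 / cnj z))) \<in> borel_measurable \<mu>"
      unfolding measurable_cong_sets[OF s\<mu> refl] upper_half_def by measurable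
    have m2[measurable]: "(\<lambda>z. ennreal (R / \<delta>\<^sup>2) * indicator (cball 0 R) z) \<in> borel_measurable \<mu>"
      unfolding measurable_cong_sets[OF s\<mu> refl] by measurable
    have "(\<integral>\<^sup>+ z. indicator upper_half z * ennreal (g z) \<partial>\<mu>)
       \<le> (\<integral>\<^sup>+ z. ennreal (R / \<delta>\<^sup>2) * indicator (cball 0 R) z + 4 * (indicator (upper_half - ball 0 r0) z * ennreal (Im (1 / cnj z))) \<partial>\<mu>)"
    proof (intro nn_integral_mono)
      fix z
      show "indicator upper_half z * ennreal (g z)
         \<le> ennreal (R / \<delta>\<^sup>2) * indicator (cball 0 R) z + 4 * (indicator (upper_half - ball 0 r0) z * ennreal (Im (1 / cnj z)))"
      proof (cases "cmod z \<le> R")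
        case True
        then show ?thesis by (auto simp: gR indicator_def)
      next
        case False
        then have "z \<notin> ball 0 r0" "z \<notin> cball 0 R" using R by auto
        then show ?thesis using False
          by (auto simp: gR indicator_def ennreal_mult' upper_half_def)
      qed
    qed
    also have "\<dots> = ennreal (R / \<delta>\<^sup>2) * emeasure \<mu> (cball 0 R) + 4 * IB \<mu>"
      unfolding IB_def
      by (subst nn_integral_add) (auto simp: s\<mu> nn_integral_cmult_indicator nn_integral_cmult)
    also have "\<dots> = ennreal (enn2real (ennreal (R / \<delta>\<^sup>2) * emeasure \<mu> (cball 0 R) + 4 * IB \<mu>))"
    proof -
      have "ennreal (R / \<delta>\<^sup>2) * emeasure \<mu> (cball 0 R) + 4 * IB \<mu> \<noteq> top"
        using fin1 fin2 by (simp add: ennreal_mult_eq_top_iff less_top)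
      then show ?thesis by (metis ennreal_enn2real_if)
    qed
    finally show ?thesis .
  qed
  define Cp where "Cp = enn2real (ennreal (R / \<delta>\<^sup>2) * emeasure \<nu>p (cball 0 R) + 4 * IB \<nu>p)"
  define Cm where "Cm = enn2real (ennreal (R / \<delta>\<^sup>2) * emeasure \<nu>m (cball 0 R) + 4 * IB \<nu>m)"
  have fc: "emeasure \<nu>p (cball 0 R) < \<infinity>" "emeasure \<nu>m (cball 0 R) < \<infinity>"
    using ch by (auto simp: is_charge_def)
  have fb: "IB \<nu>p < \<infinity>" "IB \<nu>m < \<infinity>" using bl unfolding IB_def by auto
  have Cp: "(\<integral>\<^sup>+ z. indicator upper_half z * ennreal (g z) \<partial>\<nu>p) \<le> ennreal Cp"
    unfolding Cp_def by (rule Cbound[OF sp fc(1) fb(1)])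
  have Cm: "(\<integral>\<^sup>+ z. indicator upper_half z * ennreal (g z) \<partial>\<nu>m) \<le> ennreal Cm"
    unfolding Cm_def by (rule Cbound[OF sm fc(2) fb(2)])
  have C0: "0 \<le> Cp" "0 \<le> Cm" by (auto simp: Cp_def Cm_def)
  define L where "L = (Cp + Cm) / pi"
  have key: "\<bar>distr_fun (charge_bal \<nu>p \<nu>m) b - distr_fun (charge_bal \<nu>p \<nu>m) a\<bar> \<le> L * (b - a)"
    if ab: "a \<in> {x1..x2}" "b \<in> {x1..x2}" "a < b" for a b
  proof -
    have side: "0 \<le> a \<or> b < 0" using x ab by (cases "0 \<le> x1") (auto simp: not_le)
    have "complex_of_real ` {a..b} \<subseteq> complex_of_real ` {x1..x2}" using ab by auto
    then have d: "complex_of_real ` {a..b} \<inter> charge_supp \<nu>p \<nu>m = {}" using disj by blast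
    have "\<forall>z\<in>charge_supp \<nu>p \<nu>m. Im z > 0 \<longrightarrow> (\<forall>t\<in>{a..b}. Im z / ((t - Re z)\<^sup>2 + (Im z)\<^sup>2) \<le> g z)"
      using gb ab by auto
    from F_bound[OF ch ab(3) side d this gm Cp C0(1) Cm C0(2)]
    show ?thesis by (simp add: L_def mult.commute)
  qed
  have "L-lipschitz_on {x1..x2} (distr_fun (charge_bal \<nu>p \<nu>m))"
  proof (rule lipschitz_onI)
    show "0 \<le> L" using C0 by (simp add: L_def)
    fix a b assume ab: "a \<in> {x1..x2}" "b \<in> {x1..x2}"
    consider "a < b" | "a = b" | "b < a" by linarith
    then show "dist (distr_fun (charge_bal \<nu>p \<nu>m) a) (distr_fun (charge_bal \<nu>p \<nu>m) b) \<le> L * dist a b"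
    proof cases
      case 1 then show ?thesis using key[OF ab 1] by (simp add: dist_real_def abs_minus_commute)
    next
      case 3 then show ?thesis using key[OF ab(2,1) 3] by (simp add: dist_real_def)
    qed simp
  qed
  then show ?thesis by blast
qed

lemma cball_sets'[measurable]: "cball (0::complex) r \<in> sets borel"
  by (simp add: borel_closed)

lemma dyadic_k:
  fixes \<rho> x :: real
  assumes "\<rho> > 0" "\<rho> \<le> x"
  shows "\<exists>k::nat. \<rho> * 2^k \<le> x \<and> x \<le> \<rho> * 2^(Suc k)"
proof -
  obtain n where n: "x / \<rho> < 2^n" using real_arch_pow[of 2 "x / \<rho>"] by auto
  have ex: "\<exists>n. x \<le> \<rho> * 2^(Suc n)" using n assms
    by (intro exI[of _ n]) (auto simp: field_simps)
  define k where "k = (LEAST n. x \<le> \<rho> * 2^(Suc n))"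
  have k1: "x \<le> \<rho> * 2^(Suc k)" unfolding k_def by (rule LeastI_ex[OF ex])
  have k2: "\<rho> * 2^k \<le> x"
  proof (cases k)
    case 0 then show ?thesis using assms by simp
  next
    case (Suc m)
    have "m < (LEAST n. x \<le> \<rho> * 2^(Suc n))" using Suc k_def by simp
    then have "\<not> x \<le> \<rho> * 2^(Suc m)" by (rule not_less_Least)
    then show ?thesis using Suc by simp
  qed
  show ?thesis using k1 k2 by blast
qed

lemma term_eq:
  fixes \<rho> A p :: real and k :: nat
  assumes "\<rho> > 0"
  shows "1 / (\<rho> * 2^k) * (A * (\<rho> * 2^(Suc k)) powr p) = A * 2 powr p * \<rho> powr (p - 1) * (2 powr (p - 1))^k"
proof -
  have "(\<rho> * 2^(Suc k)) powr p = \<rho> powr p * 2 powr (p * (real k + 1))"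
    using assms by (simp add: powr_mult powr_realpow[symmetric] powr_powr powr_add[symmetric] algebra_simps)
  moreover have "(2 powr (p - 1))^k = 2 powr ((p - 1) * real k)"
    by (simp add: powr_realpow[symmetric] powr_powr)
  moreover have "(2::real)^k = 2 powr real k" by (simp add: powr_realpow)
  moreover have "\<rho> powr (p - 1) = \<rho> powr p / \<rho>" using assms by (simp add: powr_diff)
  moreover have "2 powr (p * (real k + 1)) = 2 powr p * 2 powr ((p - 1) * real k) * 2 powr real k"
    by (simp add: powr_add[symmetric] algebra_simps)
  ultimately show ?thesis using assms by (simp add: field_simps)
qed

lemma dyadic_tail:
  fixes M :: "complex measure" and A p \<rho> :: real
  assumes sM: "sets M = sets borel" and A: "A \<ge> 0" and p: "0 \<le> p" "p < 1" and \<rho>: "\<rho> > 0"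
    and gr: "\<And>r. r \<ge> \<rho> \<Longrightarrow> emeasure M (cball 0 r) \<le> ennreal (A * r powr p)"
  shows "(\<integral>\<^sup>+ z. indicator (- ball 0 \<rho>) z * ennreal (1 / cmod z) \<partial>M)
      \<le> ennreal (A * 2 powr p * \<rho> powr (p - 1) / (1 - 2 powr (p - 1)))"
proof -
  define q where "q = 2 powr (p - 1)"
  have q: "0 < q" "q < 1" using p by (auto simp: q_def powr_less_one)
  define f where "f (k::nat) (z::complex) = ennreal (1 / (\<rho> * 2^k)) * indicator (cball 0 (\<rho> * 2^(Suc k))) z" for k z
  have fm[measurable]: "f k \<in> borel_measurable M" for k
    unfolding f_def measurable_cong_sets[OF sM refl] by measurable
  have "(\<integral>\<^sup>+ z. indicator (- ball 0 \<rho>) z * ennreal (1 / cmod z) \<partial>M) \<le> (\<integral>\<^sup>+ z. (\<Sum>k. f k z) \<partial>M)"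
  proof (intro nn_integral_mono)
    fix z :: complex
    show "indicator (- ball 0 \<rho>) z * ennreal (1 / cmod z) \<le> (\<Sum>k. f k z)"
    proof (cases "z \<in> ball 0 \<rho>")
      case True then show ?thesis by simp
    next
      case False
      then have "\<rho> \<le> cmod z" by simp
      then obtain k where k: "\<rho> * 2^k \<le> cmod z" "cmod z \<le> \<rho> * 2^(Suc k)" using dyadic_k[OF \<rho>] by blast
      have "indicator (- ball 0 \<rho>) z * ennreal (1 / cmod z) \<le> f k z"
        using False k \<rho> by (auto simp: indicator_def f_def intro!: ennreal_leI frac_le)
      also have "\<dots> \<le> (\<Sum>k. f k z)"
        using sum_le_suminf[of "\<lambda>k. f k z" "{k}"] by (simp add: summableI)
      finally show ?thesis .
    qed
  qed
  also have "\<dots> = (\<Sum>k. integral\<^sup>N M (f k))" by (rule nn_integral_suminf) simp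
  also have "\<dots> \<le> (\<Sum>k. ennreal (A * 2 powr p * \<rho> powr (p - 1) * q^k))"
  proof (intro suminf_le summableI)
    fix k
    have "integral\<^sup>N M (f k) = ennreal (1 / (\<rho> * 2^k)) * emeasure M (cball 0 (\<rho> * 2^(Suc k)))"
      unfolding f_def by (rule nn_integral_cmult_indicator) (simp add: sM)
    also have "\<dots> \<le> ennreal (1 / (\<rho> * 2^k)) * ennreal (A * (\<rho> * 2^(Suc k)) powr p)"
      proof (intro mult_left_mono gr)
      have "(1::real) \<le> 2 * 2^k" using one_le_power[of "2::real" k] by linarith
      then show "\<rho> \<le> \<rho> * 2 ^ Suc k" using \<rho> by simp
    qed auto
    also have "\<dots> = ennreal (A * 2 powr p * \<rho> powr (p - 1) * q^k)"
    proof -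
      have "ennreal (1 / (\<rho> * 2^k)) * ennreal (A * (\<rho> * 2^(Suc k)) powr p) = ennreal (1 / (\<rho> * 2^k) * (A * (\<rho> * 2^(Suc k)) powr p))"
        by (rule ennreal_mult[symmetric]) (use \<rho> A in auto)
      then show ?thesis by (simp only: term_eq[OF \<rho>] q_def)
    qed
    finally show "integral\<^sup>N M (f k) \<le> ennreal (A * 2 powr p * \<rho> powr (p - 1) * q^k)" .
  qed
  also have "\<dots> = ennreal (\<Sum>k. A * 2 powr p * \<rho> powr (p - 1) * q^k)"
  proof (rule suminf_ennreal2)
    show "summable (\<lambda>k. A * 2 powr p * \<rho> powr (p - 1) * q^k)"
      by (rule summable_mult, rule summable_geometric) (use q in simp)
    fix k show "0 \<le> A * 2 powr p * \<rho> powr (p - 1) * q^k" using q A by simp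
  qed
  also have "(\<Sum>k. A * 2 powr p * \<rho> powr (p - 1) * q^k) = A * 2 powr p * \<rho> powr (p - 1) * (1 / (1 - q))"
  proof -
    have sg: "summable (\<lambda>k. q^k)" by (rule summable_geometric) (use q in simp)
    have "(\<Sum>k. A * 2 powr p * \<rho> powr (p - 1) * q^k) = A * 2 powr p * \<rho> powr (p - 1) * (\<Sum>k. q^k)"
      by (rule suminf_mult[OF sg])
    also have "(\<Sum>k. q^k) = 1 / (1 - q)" by (rule suminf_geometric) (use q in simp)
    finally show ?thesis .
  qed
  finally show ?thesis by (simp add: q_def)
qed

definition gs :: "real \<Rightarrow> real \<Rightarrow> complex \<Rightarrow> real" where
  "gs c s z = (if z \<in> cball 0 (s/2) then 8 / s else if z \<in> cball 0 (4 * s) then 2 / (c * s) else 4 * (Im z / (cmod z)\<^sup>2))"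

lemma gs_meas[measurable]: "gs c s \<in> borel_measurable borel"
  unfolding gs_def by measurable

lemma meas_bound2:
  fixes \<mu> :: "complex measure" and p A r1 r0 B c s :: real
  assumes s\<mu>: "sets \<mu> = sets borel" and p: "p \<ge> 0" and A: "A \<ge> 0" and c: "c > 0"
    and gr: "\<And>r. r \<ge> r1 \<Longrightarrow> emeasure \<mu> (cball 0 r) \<le> ennreal (A * r powr p)"
    and Bl: "(\<integral>\<^sup>+ z. indicator (upper_half - ball 0 r0) z * ennreal (Im (1 / cnj z)) \<partial>\<mu>) \<le> ennreal B" and B: "B \<ge> 0"
    and s: "s \<ge> 1" "s / 2 \<ge> r1" "4 * s \<ge> r0"
  shows "(\<integral>\<^sup>+ z. indicator upper_half z * ennreal (gs c s z) \<partial>\<mu>)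
     \<le> ennreal ((8 * A + 2 * A * 4 powr p / c + 4 * (if p \<ge> 1 then B else A * 2 powr p / (1 - 2 powr (p - 1)))) * s powr (p - 1))"
proof -
  define J where "J \<rho> = (\<integral>\<^sup>+ z. indicator (upper_half - ball 0 \<rho>) z * ennreal (Im (1 / cnj z)) \<partial>\<mu>)" for \<rho>
  define T3 where "T3 = (if p \<ge> 1 then B else A * 2 powr p / (1 - 2 powr (p - 1)))"
  have sp1: "s powr (p - 1) = s powr p / s" using s by (simp add: powr_diff)
  have m1[measurable]: "(\<lambda>z. indicator (upper_half - ball 0 \<rho>) z * ennreal (Im (1 / cnj z))) \<in> borel_measurable \<mu>" for \<rho>
    unfolding measurable_cong_sets[OF s\<mu> refl] upper_half_def by measurable
  have m2[measurable]: "(\<lambda>z. ennreal a * indicator (cball 0 r) z) \<in> borel_measurable \<mu>" for a r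
    unfolding measurable_cong_sets[OF s\<mu> refl] by measurable
  have "(\<integral>\<^sup>+ z. indicator upper_half z * ennreal (gs c s z) \<partial>\<mu>)
     \<le> (\<integral>\<^sup>+ z. ennreal (8 / s) * indicator (cball 0 (s/2)) z + ennreal (2 / (c * s)) * indicator (cball 0 (4 * s)) z
            + 4 * (indicator (upper_half - ball 0 (4 * s)) z * ennreal (Im (1 / cnj z))) \<partial>\<mu>)"
  proof (intro nn_integral_mono)
    fix z :: complex
    show "indicator upper_half z * ennreal (gs c s z) \<le> ennreal (8 / s) * indicator (cball 0 (s/2)) z + ennreal (2 / (c * s)) * indicator (cball 0 (4 * s)) z
            + 4 * (indicator (upper_half - ball 0 (4 * s)) z * ennreal (Im (1 / cnj z)))"
    proof (cases "z \<in> cball 0 (s/2)")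
      case True then show ?thesis by (auto simp: gs_def indicator_def)
    next
      case F1: False
      show ?thesis
      proof (cases "z \<in> cball 0 (4 * s)")
        case True then show ?thesis using F1 by (auto simp: gs_def indicator_def)
      next
        case False
        then have "gs c s z = 4 * Im (1 / cnj z)" using F1 by (simp add: gs_def Im_inv_cnj)
        then have e: "ennreal (gs c s z) = 4 * ennreal (Im (1 / cnj z))" by (simp add: ennreal_mult')
        have "z \<notin> ball 0 (4 * s)" "z \<notin> cball 0 (s/2)" "z \<notin> cball 0 (4 * s)" using False F1 by auto
        then show ?thesis unfolding e by (auto simp: indicator_def)
      qed
    qed
  qed
  also have "\<dots> = ennreal (8 / s) * emeasure \<mu> (cball 0 (s/2)) + ennreal (2 / (c * s)) * emeasure \<mu> (cball 0 (4 * s)) + 4 * J (4 * s)"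
    unfolding J_def
    by (subst nn_integral_add, measurable, subst nn_integral_add, measurable)
       (simp add: s\<mu> nn_integral_cmult_indicator nn_integral_cmult)
  also have "\<dots> \<le> ennreal (8 * A * s powr (p - 1)) + ennreal (2 * A * 4 powr p / c * s powr (p - 1)) + ennreal (4 * T3 * s powr (p - 1))"
  proof (intro add_mono)
    have "ennreal (8 / s) * emeasure \<mu> (cball 0 (s/2)) \<le> ennreal (8 / s) * ennreal (A * (s/2) powr p)"
      using s by (intro mult_left_mono gr) auto
    also have "\<dots> = ennreal (8 / s * (A * (s/2) powr p))" by (rule ennreal_mult[symmetric]) (use s A in auto)
    also have "\<dots> \<le> ennreal (8 * A * s powr (p - 1))"
    proof (intro ennreal_leI)
      have "(s/2) powr p \<le> s powr p" using s p by (intro powr_mono2) auto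
      then have "8 / s * (A * (s/2) powr p) \<le> 8 / s * (A * s powr p)"
        using s A by (intro mult_left_mono) auto
      then show "8 / s * (A * (s/2) powr p) \<le> 8 * A * s powr (p - 1)" by (simp add: sp1)
    qed
    finally show "ennreal (8 / s) * emeasure \<mu> (cball 0 (s/2)) \<le> ennreal (8 * A * s powr (p - 1))" .
  next
    have "ennreal (2 / (c * s)) * emeasure \<mu> (cball 0 (4 * s)) \<le> ennreal (2 / (c * s)) * ennreal (A * (4 * s) powr p)"
      using s by (intro mult_left_mono gr) auto
    also have "\<dots> = ennreal (2 / (c * s) * (A * (4 * s) powr p))" by (rule ennreal_mult[symmetric]) (use s A c in auto)
    also have "2 / (c * s) * (A * (4 * s) powr p) = 2 * A * 4 powr p / c * s powr (p - 1)"
      using s c by (simp add: powr_mult sp1)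
    finally show "ennreal (2 / (c * s)) * emeasure \<mu> (cball 0 (4 * s)) \<le> ennreal (2 * A * 4 powr p / c * s powr (p - 1))" .
  next
    have "J (4 * s) \<le> ennreal (T3 * s powr (p - 1))"
    proof (cases "p \<ge> 1")
      case True
      have "J (4 * s) \<le> J r0" unfolding J_def
        using s by (intro nn_integral_mono) (auto simp: indicator_def)
      also have "\<dots> \<le> ennreal B" using Bl by (simp add: J_def)
      also have "\<dots> \<le> ennreal (B * s powr (p - 1))"
      proof (intro ennreal_leI)
        have "1 \<le> s powr (p - 1)" using s True by (simp add: ge_one_powr_ge_zero)
        then show "B \<le> B * s powr (p - 1)" using B by (metis mult.right_neutral mult_left_mono)
      qed
      finally show ?thesis using True by (simp add: T3_def)
    next
      case False
      have "J (4 * s) \<le> (\<integral>\<^sup>+ z. indicator (- ball 0 (4 * s)) z * ennreal (1 / cmod z) \<partial>\<mu>)"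
        unfolding J_def
      proof (intro nn_integral_mono)
        fix z :: complex
        show "indicator (upper_half - ball 0 (4 * s)) z * ennreal (Im (1 / cnj z)) \<le> indicator (- ball 0 (4 * s)) z * ennreal (1 / cmod z)"
        proof (cases "z \<in> upper_half - ball 0 (4 * s)")
          case True
          then have z0: "cmod z > 0" using s by auto
          have "Im z / (cmod z)\<^sup>2 \<le> cmod z / (cmod z)\<^sup>2"
            using abs_Im_le_cmod[of z] z0 by (intro divide_right_mono) auto
          also have "\<dots> = 1 / cmod z" using z0 by (simp add: power2_eq_square)
          finally show ?thesis using True by (auto simp: indicator_def Im_inv_cnj intro!: ennreal_leI)
        qed (auto simp: indicator_def)
      qed
      also have "\<dots> \<le> ennreal (A * 2 powr p * (4 * s) powr (p - 1) / (1 - 2 powr (p - 1)))"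
        using s False by (intro dyadic_tail[OF s\<mu> A p] gr) auto
      also have "\<dots> \<le> ennreal (A * 2 powr p / (1 - 2 powr (p - 1)) * s powr (p - 1))"
      proof (intro ennreal_leI)
        have q: "2 powr (p - 1) < 1" using False by (simp add: powr_less_one)
        have "(4 * s) powr (p - 1) = 4 powr (p - 1) * s powr (p - 1)" by (simp add: powr_mult)
        also have "\<dots> \<le> 1 * s powr (p - 1)"
          using False powr_less_one[of 4 "p - 1"] by (intro mult_right_mono) auto
        finally have h: "(4 * s) powr (p - 1) \<le> s powr (p - 1)" by simp
        have "A * 2 powr p * (4 * s) powr (p - 1) \<le> A * 2 powr p * s powr (p - 1)"
          using h A by (intro mult_left_mono) auto
        then show "A * 2 powr p * (4 * s) powr (p - 1) / (1 - 2 powr (p - 1)) \<le> A * 2 powr p / (1 - 2 powr (p - 1)) * s powr (p - 1)"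
          using q by (simp add: divide_right_mono)
      qed
      finally show ?thesis using False by (simp add: T3_def)
    qed
    then have "4 * J (4 * s) \<le> 4 * ennreal (T3 * s powr (p - 1))" by (intro mult_left_mono) auto
    then show "4 * J (4 * s) \<le> ennreal (4 * T3 * s powr (p - 1))" by (simp add: ennreal_mult' mult.assoc)
  qed
  also have "\<dots> = ennreal ((8 * A + 2 * A * 4 powr p / c + 4 * T3) * s powr (p - 1))"
  proof -
    have T30: "T3 \<ge> 0" using B A p by (auto simp: T3_def powr_less_one intro!: divide_nonneg_pos)
    show ?thesis using A c T30 by (simp add: ennreal_plus[symmetric] distrib_right del: ennreal_plus)
  qed
  finally show ?thesis by (simp add: T3_def)
qed

lemma dens2:
  fixes z :: complex and c s t R0 :: real
  assumes c: "c > 0" and s: "s > 0" "s / 2 \<ge> R0" and t: "3 * s / 4 \<le> \<bar>t\<bar>" "\<bar>t\<bar> \<le> 5 * s / 4"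
    and z: "Im z > 0" and cone: "cmod z \<ge> R0 \<Longrightarrow> Im z \<ge> c * cmod z"
  shows "Im z / ((t - Re z)\<^sup>2 + (Im z)\<^sup>2) \<le> gs c s z"
proof -
  have tri: "\<bar>\<bar>t\<bar> - cmod z\<bar> \<le> cmod (z - complex_of_real t)"
    using norm_triangle_ineq3[of z "complex_of_real t"] by (simp add: abs_minus_commute)
  have p1: "0 < (t - Re z)\<^sup>2 + (Im z)\<^sup>2" using z by (simp add: add_nonneg_pos)
  show ?thesis
  proof (cases "z \<in> cball 0 (s/2)")
    case True
    then have zc: "cmod z \<le> s/2" by simp
    have "s / 4 \<le> cmod (z - complex_of_real t)" using tri zc t by linarith
    then have d2: "(s/4)\<^sup>2 \<le> (t - Re z)\<^sup>2 + (Im z)\<^sup>2" unfolding dens_eq using s by (intro power_mono) auto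
    have "Im z \<le> s / 2" using zc abs_Im_le_cmod[of z] by linarith
    then have "Im z / ((t - Re z)\<^sup>2 + (Im z)\<^sup>2) \<le> (s/2) / (s/4)\<^sup>2"
      using d2 z s by (intro frac_le) auto
    also have "\<dots> = 8 / s" using s by (simp add: power2_eq_square field_simps)
    finally show ?thesis using True by (simp add: gs_def)
  next
    case F1: False
    then have zc: "cmod z > s/2" by simp
    show ?thesis
    proof (cases "z \<in> cball 0 (4 * s)")
      case True
      have ic: "Im z \<ge> c * cmod z" using cone zc s by auto
      have "Im z / ((t - Re z)\<^sup>2 + (Im z)\<^sup>2) \<le> Im z / (Im z)\<^sup>2"
        using z p1 by (intro divide_left_mono) auto
      also have "\<dots> = 1 / Im z" using z by (simp add: power2_eq_square)
      also have "\<dots> \<le> 1 / (c * (s/2))"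
      proof (intro divide_left_mono)
        have "c * (s/2) \<le> c * cmod z" using c zc by (intro mult_left_mono) auto
        then show "c * (s/2) \<le> Im z" using ic by linarith
      qed (use c s z in auto)
      also have "\<dots> = 2 / (c * s)" by simp
      finally show ?thesis using True F1 by (simp add: gs_def)
    next
      case False
      then have zc4: "cmod z > 4 * s" by simp
      have h: "cmod z / 2 \<le> cmod (z - complex_of_real t)" using tri zc4 t by linarith
      have d2: "(cmod z)\<^sup>2 / 4 \<le> (t - Re z)\<^sup>2 + (Im z)\<^sup>2" unfolding dens_eq
        using power_mono[OF h, of 2] by (simp add: power_divide)
      have cz: "cmod z > 0" using zc s by linarith
      have "Im z / ((t - Re z)\<^sup>2 + (Im z)\<^sup>2) \<le> Im z / ((cmod z)\<^sup>2 / 4)"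
        using d2 p1 cz z by (intro divide_left_mono) (auto simp: zero_less_mult_iff)
      also have "\<dots> = 4 * (Im z / (cmod z)\<^sup>2)" by simp
      finally show ?thesis using False F1 by (simp add: gs_def)
    qed
  qed
qed

lemma growth_extract:
  fixes p :: real
  assumes "Limsup at_top (\<lambda>r::real. enn2ereal (T r) / ereal (r powr p)) < \<infinity>"
  obtains A r1 where "A \<ge> 0" "r1 > 0" "\<And>r. r \<ge> r1 \<Longrightarrow> T r \<le> ennreal (A * r powr p)"
proof -
  obtain n :: nat where n: "Limsup at_top (\<lambda>r::real. enn2ereal (T r) / ereal (r powr p)) < ereal (real n)"
    using assms less_PInf_Ex_of_nat by auto
  have "eventually (\<lambda>r. enn2ereal (T r) / ereal (r powr p) < ereal (real n)) at_top"
    by (rule Limsup_lessD[OF n])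
  then obtain N where N: "\<And>r. r \<ge> N \<Longrightarrow> enn2ereal (T r) / ereal (r powr p) < ereal (real n)"
    by (auto simp: eventually_at_top_linorder)
  have "T r \<le> ennreal (real n * r powr p)" if r: "r \<ge> max N 1" for r
  proof -
    have rp: "r powr p > 0" using r by auto
    have "enn2ereal (T r) < ereal (real n) * ereal (r powr p)"
    proof -
      have h: "enn2ereal (T r) / ereal (r powr p) < ereal (real n)" using N[of r] r by auto
      show ?thesis using h ereal_divide_less_iff[of "ereal (r powr p)" "enn2ereal (T r)" "ereal (real n)"] rp by simp
    qed
    then have "enn2ereal (T r) < enn2ereal (ennreal (real n * r powr p))"
      using rp by simp
    then have "T r < ennreal (real n * r powr p)" by (simp only: less_ennreal.rep_eq)
    then show ?thesis by (rule less_imp_le)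
  qed
  then show ?thesis using that[of "real n" "max N 1"] by auto
qed

lemma cone_extract:
  assumes "Liminf (inf at_infinity (principal S)) (\<lambda>z::complex. ereal (Im z / cmod z)) > 0"
  obtains c R0 where "c > 0" "R0 > 0" "\<And>z. z \<in> S \<Longrightarrow> cmod z \<ge> R0 \<Longrightarrow> Im z \<ge> c * cmod z"
proof -
  obtain c where c: "0 < ereal c" "ereal c < Liminf (inf at_infinity (principal S)) (\<lambda>z::complex. ereal (Im z / cmod z))"
    using ereal_dense2[OF assms] by auto
  have "eventually (\<lambda>z. ereal (Im z / cmod z) > ereal c) (inf at_infinity (principal S))"
    by (rule less_LiminfD[OF c(2)])
  then obtain b where b: "\<And>z. b \<le> cmod z \<Longrightarrow> z \<in> S \<Longrightarrow> Im z / cmod z > c"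
    by (auto simp: eventually_inf_principal eventually_at_infinity)
  have "Im z \<ge> c * cmod z" if "z \<in> S" "cmod z \<ge> max b 1" for z
  proof -
    have "Im z / cmod z > c" using b that by auto
    moreover have "cmod z > 0" using that by auto
    ultimately show ?thesis by (simp add: field_simps)
  qed
  then show ?thesis using that[of c "max b 1"] c by auto
qed

lemma part2:
  fixes \<nu>p \<nu>m :: "complex measure" and p r0 :: real
  assumes ch: "is_charge \<nu>p \<nu>m" and r0: "r0 > 0"
    and bl: "(\<integral>\<^sup>+ z. indicator (upper_half - ball 0 r0) z * ennreal (Im (1 / cnj z)) \<partial>\<nu>p)
                        + (\<integral>\<^sup>+ z. indicator (upper_half - ball 0 r0) z * ennreal (Im (1 / cnj z)) \<partial>\<nu>m) < \<infinity>"
    and p: "p \<ge> 0"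
    and lim: "Limsup at_top (\<lambda>r::real. enn2ereal (totvar \<nu>p \<nu>m (cball 0 r)) / ereal (r powr p)) < \<infinity>"
    and lif: "Liminf (inf at_infinity (principal ({z. Im z \<ge> 0} \<inter> charge_supp \<nu>p \<nu>m)))
                 (\<lambda>z. ereal (Im z / cmod z)) > 0"
  shows "\<exists>b>0. \<exists>r0>0. \<forall>t1 t2. t1 < t2 \<and> \<bar>(t1 + t2) / 2\<bar> \<ge> r0
                       \<and> \<bar>t2 - t1\<bar> \<le> \<bar>(t1 + t2) / 2\<bar> / 2
                 \<longrightarrow> \<bar>distr_fun (charge_bal \<nu>p \<nu>m) t2 - distr_fun (charge_bal \<nu>p \<nu>m) t1\<bar> \<le> b * \<bar>t2 - t1\<bar> * \<bar>(t1 + t2) / 2\<bar> powr (p - 1)"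
proof -
  have sp: "sets \<nu>p = sets borel" and sm: "sets \<nu>m = sets borel" using ch by (auto simp: is_charge_def)
  obtain A r1 where A: "A \<ge> 0" "r1 > 0" and gr: "\<And>r. r \<ge> r1 \<Longrightarrow> totvar \<nu>p \<nu>m (cball 0 r) \<le> ennreal (A * r powr p)"
    using growth_extract[OF lim] by blast
  have grp: "emeasure \<nu>p (cball 0 r) \<le> ennreal (A * r powr p)" if "r \<ge> r1" for r
    using gr[OF that] unfolding totvar_def by (meson add_increasing2 order_trans zero_le order_refl)
  have grm: "emeasure \<nu>m (cball 0 r) \<le> ennreal (A * r powr p)" if "r \<ge> r1" for r
    using gr[OF that] unfolding totvar_def by (meson add_increasing order_trans zero_le order_refl)
  obtain c R0 where c: "c > 0" "R0 > 0"
    and cone: "\<And>z. z \<in> {z. Im z \<ge> 0} \<inter> charge_supp \<nu>p \<nu>m \<Longrightarrow> cmod z \<ge> R0 \<Longrightarrow> Im z \<ge> c * cmod z"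
    using cone_extract[OF lif] by blast
  define IBp where "IBp = (\<integral>\<^sup>+ z. indicator (upper_half - ball 0 r0) z * ennreal (Im (1 / cnj z)) \<partial>\<nu>p)"
  define IBm where "IBm = (\<integral>\<^sup>+ z. indicator (upper_half - ball 0 r0) z * ennreal (Im (1 / cnj z)) \<partial>\<nu>m)"
  have fin: "IBp < \<infinity>" "IBm < \<infinity>" using bl by (auto simp: IBp_def IBm_def)
  define Bp where "Bp = enn2real IBp"
  define Bm where "Bm = enn2real IBm"
  have Bp: "IBp \<le> ennreal Bp" "Bp \<ge> 0" using fin by (auto simp: Bp_def)
  have Bm: "IBm \<le> ennreal Bm" "Bm \<ge> 0" using fin by (auto simp: Bm_def)
  define K where "K B = 8 * A + 2 * A * 4 powr p / c + 4 * (if p \<ge> 1 then B else A * 2 powr p / (1 - 2 powr (p - 1)))" for B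
  have K0: "K B \<ge> 0" if "B \<ge> 0" for B
  proof -
    have "(if p \<ge> 1 then B else A * 2 powr p / (1 - 2 powr (p - 1))) \<ge> 0"
      using that A p by (auto simp: powr_less_one intro!: divide_nonneg_pos)
    then show ?thesis using A c by (simp add: K_def)
  qed
  define b where "b = (K Bp + K Bm) / pi + 1"
  have b: "b > 0" using K0[OF Bp(2)] K0[OF Bm(2)] by (simp add: b_def add_nonneg_pos)
  define rr where "rr = max (max (2 * r1) (2 * R0)) (max r0 1)"
  have rr: "rr > 0" by (simp add: rr_def)
  have main: "\<bar>distr_fun (charge_bal \<nu>p \<nu>m) t2 - distr_fun (charge_bal \<nu>p \<nu>m) t1\<bar> \<le> b * \<bar>t2 - t1\<bar> * \<bar>(t1 + t2) / 2\<bar> powr (p - 1)"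
    if t: "t1 < t2" "\<bar>(t1 + t2) / 2\<bar> \<ge> rr" "\<bar>t2 - t1\<bar> \<le> \<bar>(t1 + t2) / 2\<bar> / 2" for t1 t2
  proof -
    define s where "s = \<bar>(t1 + t2) / 2\<bar>"
    have s: "s \<ge> 1" "s / 2 \<ge> r1" "s / 2 \<ge> R0" "4 * s \<ge> r0" "s > 0"
    proof -
      have "s \<ge> rr" using t(2) by (simp add: s_def)
      moreover have "rr \<ge> 2 * r1" "rr \<ge> 2 * R0" "rr \<ge> r0" "rr \<ge> 1" by (simp_all add: rr_def)
      ultimately show "s \<ge> 1" "s / 2 \<ge> r1" "s / 2 \<ge> R0" "4 * s \<ge> r0" "s > 0" using r0 by linarith+
    qed
    have tt: "3 * s / 4 \<le> \<bar>t\<bar> \<and> \<bar>t\<bar> \<le> 5 * s / 4" if "t \<in> {t1..t2}" for t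
    proof -
      have h1: "t2 - t1 \<le> s / 2" using t(3) t(1) by (simp add: s_def)
      have h2: "\<bar>t - (t1 + t2) / 2\<bar> \<le> (t2 - t1) / 2" by (rule abs_leI) (use that in \<open>auto simp: field_simps\<close>)
      have h3: "\<bar>\<bar>t\<bar> - s\<bar> \<le> \<bar>t - (t1 + t2) / 2\<bar>" unfolding s_def by (rule abs_triangle_ineq3)
      show ?thesis using h1 h2 h3 by (auto simp: abs_le_iff)
    qed
    have h1: "t2 - t1 \<le> s / 2" using t(3) t(1) by (simp add: s_def)
    have side: "0 \<le> t1 \<or> t2 < 0"
    proof (cases "(t1 + t2) / 2 \<ge> 0")
      case True then have "s = (t1 + t2) / 2" by (simp add: s_def)
      then have "0 \<le> t1" using h1 s(5) by (simp add: field_simps)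
      then show ?thesis ..
    next
      case False then have "s = - ((t1 + t2) / 2)" by (simp add: s_def abs_if)
      then have "t2 < 0" using h1 s(5) by (simp add: field_simps)
      then show ?thesis ..
    qed
    have disj: "complex_of_real ` {t1..t2} \<inter> charge_supp \<nu>p \<nu>m = {}"
    proof (rule ccontr)
      assume "complex_of_real ` {t1..t2} \<inter> charge_supp \<nu>p \<nu>m \<noteq> {}"
      then obtain t where t': "t \<in> {t1..t2}" "complex_of_real t \<in> charge_supp \<nu>p \<nu>m" by blast
      have "cmod (complex_of_real t) \<ge> R0" using tt[OF t'(1)] s by simp
      then have "0 \<ge> c * \<bar>t\<bar>" using cone[of "complex_of_real t"] t' by simp
      moreover have "\<bar>t\<bar> > 0" using tt[OF t'(1)] s by linarith
      ultimately show False using c by (simp add: mult_le_0_iff)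
    qed
    have gb: "\<forall>z\<in>charge_supp \<nu>p \<nu>m. Im z > 0 \<longrightarrow> (\<forall>t\<in>{t1..t2}. Im z / ((t - Re z)\<^sup>2 + (Im z)\<^sup>2) \<le> gs c s z)"
    proof (intro ballI impI)
      fix z t assume z: "z \<in> charge_supp \<nu>p \<nu>m" "Im z > 0" and tin: "t \<in> {t1..t2}"
      show "Im z / ((t - Re z)\<^sup>2 + (Im z)\<^sup>2) \<le> gs c s z"
        by (rule dens2[OF c(1) s(5) s(3)]) (use tt[OF tin] z cone in auto)
    qed
    have Cp: "(\<integral>\<^sup>+ z. indicator upper_half z * ennreal (gs c s z) \<partial>\<nu>p) \<le> ennreal (K Bp * s powr (p - 1))"
      unfolding K_def by (rule meas_bound2[OF sp p A(1) c(1) grp _ Bp(2) s(1,2,4)]) (use Bp in \<open>simp_all add: IBp_def\<close>)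
    have Cm: "(\<integral>\<^sup>+ z. indicator upper_half z * ennreal (gs c s z) \<partial>\<nu>m) \<le> ennreal (K Bm * s powr (p - 1))"
      unfolding K_def by (rule meas_bound2[OF sm p A(1) c(1) grm _ Bm(2) s(1,2,4)]) (use Bm in \<open>simp_all add: IBm_def\<close>)
    have "\<bar>distr_fun (charge_bal \<nu>p \<nu>m) t2 - distr_fun (charge_bal \<nu>p \<nu>m) t1\<bar>
        \<le> (t2 - t1) / pi * (K Bp * s powr (p - 1) + K Bm * s powr (p - 1))"
      by (rule F_bound[OF ch t(1) side disj gb gs_meas Cp _ Cm]) (use K0 Bp Bm in auto)
    also have "\<dots> = (K Bp + K Bm) / pi * (t2 - t1) * s powr (p - 1)" by (simp add: field_simps)
    also have "\<dots> \<le> b * \<bar>t2 - t1\<bar> * s powr (p - 1)"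
      using t(1) by (intro mult_right_mono) (auto simp: b_def algebra_simps)
    finally show ?thesis by (simp add: s_def)
  qed
  show ?thesis using b rr main by blast
qed

theorem corollary2:
  fixes \<nu>p \<nu>m :: "complex measure"
  assumes charge: "is_charge \<nu>p \<nu>m"
    and blaschke: "\<exists>r0>0. (\<integral>\<^sup>+ z. indicator (upper_half - ball 0 r0) z * ennreal (Im (1 / cnj z)) \<partial>\<nu>p)
                        + (\<integral>\<^sup>+ z. indicator (upper_half - ball 0 r0) z * ennreal (Im (1 / cnj z)) \<partial>\<nu>m) < \<infinity>"
  defines "F \<equiv> distr_fun (charge_bal \<nu>p \<nu>m)"
  shows "(\<forall>x1 x2. x1 \<le> x2 \<and> 0 \<notin> {x1..x2} \<and> complex_of_real ` {x1..x2} \<inter> charge_supp \<nu>p \<nu>m = {}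
            \<longrightarrow> (\<exists>L. L-lipschitz_on {x1..x2} F))
      \<and> (\<forall>p::real. p \<ge> 0
           \<and> Limsup at_top (\<lambda>r::real. enn2ereal (totvar \<nu>p \<nu>m (cball 0 r)) / ereal (r powr p)) < \<infinity>
           \<and> Liminf (inf at_infinity (principal ({z. Im z \<ge> 0} \<inter> charge_supp \<nu>p \<nu>m)))
                 (\<lambda>z. ereal (Im z / cmod z)) > 0
           \<longrightarrow> (\<exists>b>0. \<exists>r0>0. \<forall>t1 t2. t1 < t2 \<and> \<bar>(t1 + t2) / 2\<bar> \<ge> r0
                       \<and> \<bar>t2 - t1\<bar> \<le> \<bar>(t1 + t2) / 2\<bar> / 2
                 \<longrightarrow> \<bar>F t2 - F t1\<bar> \<le> b * \<bar>t2 - t1\<bar> * \<bar>(t1 + t2) / 2\<bar> powr (p - 1)))"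
proof -
  obtain r0 where r0: "r0 > 0" and bl: "(\<integral>\<^sup>+ z. indicator (upper_half - ball 0 r0) z * ennreal (Im (1 / cnj z)) \<partial>\<nu>p)
                        + (\<integral>\<^sup>+ z. indicator (upper_half - ball 0 r0) z * ennreal (Im (1 / cnj z)) \<partial>\<nu>m) < \<infinity>"
    using blaschke by blast
  show ?thesis
    unfolding F_def
    using part1[OF charge r0 bl] part2[OF charge r0 bl] by blast
qed

end
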